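(* Let $a,b\in\mathbb{B}^2$ with $a\ne b$ and $|a|\ne|b|$. Put $$t=\frac{-(1-|a|^2)+\sqrt{(1-|a|^2)(1-|b|^2)}}{|a|^2-|b|^2},\qquad c=(1-t)a+tb.$$ Then $0<t<1$, $h_{\mathbb{B}^2}(a,c)=h_{\mathbb{B}^2}(c,b)$, and $\rho_{\mathbb{B}^2}(a,c)=\rho_{\mathbb{B}^2}(c,b)$.
   Context: $\mathbb{B}^2$ is the open unit disk in $\mathbb{C}$. The hyperbolic metric is given by $\operatorname{sh}\frac{\rho_{\mathbb{B}^2}(x,y)}{2}=\frac{|x-y|}{\sqrt{(1-|x|^2)(1-|y|^2)}}$. For distinct $x,y\in\mathbb{B}^2$ the Hilbert metric is $h_{\mathbb{B}^2}(x,y)=\log\frac{|u-y||x-v|}{|u-x||y-v|}$, where $u,v$ are the intersection points of the line through $x,y$ with the unit circle, labelled so that $|u-x|<|u-y|$. *)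

theory Defs
  imports "HOL-Analysis.Analysis"
begin

definition rho_disk :: "complex \<Rightarrow> complex \<Rightarrow> real" where
  "rho_disk x y = 2 * arsinh (cmod (x - y) / sqrt ((1 - (cmod x)\<^sup>2) * (1 - (cmod y)\<^sup>2)))"

definition on_line :: "complex \<Rightarrow> complex \<Rightarrow> complex \<Rightarrow> bool" where
  "on_line x y z \<longleftrightarrow> (\<exists>s::real. z = x + complex_of_real s * (y - x))"

definition hilbert_disk :: "complex \<Rightarrow> complex \<Rightarrow> real" where
  "hilbert_disk x y = (if x = y then 0 else
     (THE r. \<exists>u v. u \<noteq> v \<and> cmod u = 1 \<and> cmod v = 1 \<and> on_line x y u \<and> on_line x y v
        \<and> cmod (u - x) < cmod (u - y)
        \<and> r = ln ((cmod (u - y) * cmod (x - v)) / (cmod (u - x) * cmod (y - v)))))"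

end

theory Submission
  imports Defs
begin

lemma dist_line: "cmod (a + complex_of_real s * d - (a + complex_of_real p * d)) = \<bar>s - p\<bar> * cmod d"
proof -
  have "a + complex_of_real s * d - (a + complex_of_real p * d) = complex_of_real (s - p) * d"
    by (simp add: algebra_simps)
  thus ?thesis by (simp only: norm_mult norm_of_real)
qed

lemma hilbert_line:
  fixes a d :: complex and p q s1 s2 :: real
  assumes d: "d \<noteq> 0" and o: "s1 < p" "p < q" "q < s2"
    and circ: "\<And>s. cmod (a + complex_of_real s * d) = 1 \<longleftrightarrow> s = s1 \<or> s = s2"
  shows "hilbert_disk (a + complex_of_real p * d) (a + complex_of_real q * d)
         = ln ((q - s1) * (s2 - p) / ((p - s1) * (s2 - q)))"
proof -
  define z where "z s = a + complex_of_real s * d" for s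
  have zd: "cmod (z s - z r) = \<bar>s - r\<bar> * cmod d" for s r
    unfolding z_def by (rule dist_line)
  have nd: "cmod d > 0" using d by simp
  have xy: "z p \<noteq> z q"
  proof
    assume "z p = z q" hence "cmod (z p - z q) = 0" by simp
    with zd[of p q] nd o show False by simp
  qed
  have onl: "on_line (z p) (z q) u \<Longrightarrow> \<exists>s. u = z s" for u
  proof -
    assume "on_line (z p) (z q) u"
    then obtain s where "u = z p + complex_of_real s * (z q - z p)" unfolding on_line_def by blast
    hence "u = z (p + s * (q - p))" unfolding z_def by (simp add: algebra_simps)
    thus ?thesis by blast
  qed
  have onl2: "on_line (z p) (z q) (z s)" for s
    unfolding on_line_def
  proof (intro exI[of _ "(s - p) / (q - p)"])
    define k where "k = (s - p) / (q - p)"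
    have "q - p \<noteq> 0" using o by simp
    hence "s = p + k * (q - p)" unfolding k_def by simp
    hence ceq: "complex_of_real s = complex_of_real p + complex_of_real k * (complex_of_real q - complex_of_real p)"
      by (metis of_real_add of_real_mult of_real_diff)
    have "z s = a + (complex_of_real p + complex_of_real k * (complex_of_real q - complex_of_real p)) * d"
      unfolding z_def ceq ..
    also have "\<dots> = z p + complex_of_real k * (z q - z p)"
      unfolding z_def by (simp add: algebra_simps)
    finally show "z s = z p + complex_of_real ((s - p) / (q - p)) * (z q - z p)"
      unfolding k_def .
  qed
  have cz: "cmod (z s) = 1 \<longleftrightarrow> s = s1 \<or> s = s2" for s unfolding z_def by (rule circ)
  have inj: "z s = z r \<Longrightarrow> s = r" for s r
  proof -
    assume "z s = z r" hence "cmod (z s - z r) = 0" by simp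
    with zd[of s r] nd show ?thesis by simp
  qed
  define V where "V = ln ((q - s1) * (s2 - p) / ((p - s1) * (s2 - q)))"
  have key: "(\<exists>u v. u \<noteq> v \<and> cmod u = 1 \<and> cmod v = 1 \<and> on_line (z p) (z q) u \<and> on_line (z p) (z q) v
        \<and> cmod (u - z p) < cmod (u - z q)
        \<and> r = ln ((cmod (u - z q) * cmod (z p - v)) / (cmod (u - z p) * cmod (z q - v)))) \<longleftrightarrow> r = V" for r
  proof
    assume "\<exists>u v. u \<noteq> v \<and> cmod u = 1 \<and> cmod v = 1 \<and> on_line (z p) (z q) u \<and> on_line (z p) (z q) v
        \<and> cmod (u - z p) < cmod (u - z q)
        \<and> r = ln ((cmod (u - z q) * cmod (z p - v)) / (cmod (u - z p) * cmod (z q - v)))"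
    then obtain u v where uv: "u \<noteq> v" "cmod u = 1" "cmod v = 1" "on_line (z p) (z q) u" "on_line (z p) (z q) v"
        "cmod (u - z p) < cmod (u - z q)"
        "r = ln ((cmod (u - z q) * cmod (z p - v)) / (cmod (u - z p) * cmod (z q - v)))" by blast
    obtain su where su: "u = z su" using onl uv(4) by blast
    obtain sv where sv: "v = z sv" using onl uv(5) by blast
    have su12: "su = s1 \<or> su = s2" using cz uv(2) su by simp
    have sv12: "sv = s1 \<or> sv = s2" using cz uv(3) sv by simp
    have "su \<noteq> s2"
    proof
      assume "su = s2"
      with uv(6) su zd[of s2 p] zd[of s2 q] nd o show False by simp
    qed
    hence "su = s1" using su12 by simp
    moreover have "sv = s2" using sv12 uv(1) su sv \<open>su = s1\<close> by auto
    ultimately show "r = V" using uv(7) su sv zd nd o unfolding V_def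
      by (simp add: abs_minus_commute; simp add: field_simps)
  next
    assume "r = V"
    show "\<exists>u v. u \<noteq> v \<and> cmod u = 1 \<and> cmod v = 1 \<and> on_line (z p) (z q) u \<and> on_line (z p) (z q) v
        \<and> cmod (u - z p) < cmod (u - z q)
        \<and> r = ln ((cmod (u - z q) * cmod (z p - v)) / (cmod (u - z p) * cmod (z q - v)))"
    proof (intro exI conjI)
      show "z s1 \<noteq> z s2" using inj o by force
      show "cmod (z s1) = 1" "cmod (z s2) = 1" using cz by auto
      show "on_line (z p) (z q) (z s1)" "on_line (z p) (z q) (z s2)" by (rule onl2)+
      show "cmod (z s1 - z p) < cmod (z s1 - z q)" using zd[of s1 p] zd[of s1 q] nd o by simp
      show "r = ln ((cmod (z s1 - z q) * cmod (z p - z s2)) / (cmod (z s1 - z p) * cmod (z q - z s2)))"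
        using \<open>r = V\<close> zd nd o unfolding V_def
        by (simp add: abs_minus_commute; simp add: field_simps)
    qed
  qed
  have "hilbert_disk (z p) (z q) = V"
    unfolding hilbert_disk_def using xy key by simp
  thus ?thesis unfolding z_def V_def .
qed


lemma sq_line: "(cmod (a + complex_of_real s * d))\<^sup>2
   = (cmod a)\<^sup>2 + 2 * s * (Re a * Re d + Im a * Im d) + s\<^sup>2 * (cmod d)\<^sup>2"
  unfolding cmod_power2 by (simp add: power2_eq_square algebra_simps)

theorem mainTheorem10:
  fixes a b :: complex
  assumes "cmod a < 1" and "cmod b < 1" and "a \<noteq> b" and "cmod a \<noteq> cmod b"
  defines "t \<equiv> (- (1 - (cmod a)\<^sup>2) + sqrt ((1 - (cmod a)\<^sup>2) * (1 - (cmod b)\<^sup>2)))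
                 / ((cmod a)\<^sup>2 - (cmod b)\<^sup>2)"
  defines "c \<equiv> complex_of_real (1 - t) * a + complex_of_real t * b"
  shows "0 < t \<and> t < 1 \<and> hilbert_disk a c = hilbert_disk c b \<and> rho_disk a c = rho_disk c b"
proof -
  define A where "A = (cmod a)\<^sup>2"
  define B where "B = (cmod b)\<^sup>2"
  define sa where "sa = sqrt (1 - A)"
  define sb where "sb = sqrt (1 - B)"
  have A1: "A < 1" unfolding A_def using power_strict_mono[OF assms(1) norm_ge_zero, of 2] by simp
  have B1: "B < 1" unfolding B_def using power_strict_mono[OF assms(2) norm_ge_zero, of 2] by simp
  have A0: "A \<ge> 0" "B \<ge> 0" unfolding A_def B_def by auto
  have AB: "A \<noteq> B" unfolding A_def B_def using assms(4)
    by (metis norm_ge_zero power2_eq_imp_eq)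
  have sa0: "sa > 0" and sb0: "sb > 0" unfolding sa_def sb_def using A1 B1 by auto
  have sa2: "sa\<^sup>2 = 1 - A" and sb2: "sb\<^sup>2 = 1 - B" unfolding sa_def sb_def using A1 B1 by auto
  have sab: "sa \<noteq> sb" using sa2 sb2 AB by auto
  have tdef: "t = (- sa\<^sup>2 + sa * sb) / (sb\<^sup>2 - sa\<^sup>2)"
    unfolding t_def sa2 sb2 unfolding A_def B_def sa_def sb_def by (simp add: real_sqrt_mult)
  have tt: "t = sa / (sa + sb)"
  proof -
    have "- sa\<^sup>2 + sa * sb = sa * (sb - sa)" by (simp add: power2_eq_square algebra_simps)
    moreover have "sb\<^sup>2 - sa\<^sup>2 = (sb - sa) * (sa + sb)" by (simp add: power2_eq_square algebra_simps)
    ultimately show ?thesis using tdef sab sa0 sb0 by simp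
  qed
  have t0: "0 < t" unfolding tt using sa0 sb0 by simp
  have t1: "t < 1" unfolding tt using sa0 sb0 by (simp add: divide_less_eq)
  have tsum: "t * (sa + sb) = sa" using tt sa0 sb0 by (simp add: field_simps)
  have tquad: "(A - B) * t\<^sup>2 + 2 * (1 - A) * t - (1 - A) = 0"
  proof -
    have "(A - B) * t\<^sup>2 + 2 * (1 - A) * t - (1 - A)
       = (sb\<^sup>2 - sa\<^sup>2) * t\<^sup>2 + 2 * sa\<^sup>2 * t - sa\<^sup>2" using sa2 sb2 by simp
    also have "\<dots> = (sb - sa) * t * (t * (sa + sb)) + 2 * sa\<^sup>2 * t - sa\<^sup>2"
      by (simp add: power2_eq_square algebra_simps)
    also have "\<dots> = (sb - sa) * t * sa + 2 * sa\<^sup>2 * t - sa\<^sup>2" unfolding tsum ..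
    also have "\<dots> = sa * (t * (sa + sb)) - sa\<^sup>2"
      by (simp add: power2_eq_square algebra_simps)
    also have "\<dots> = 0" unfolding tsum by (simp add: power2_eq_square)
    finally show ?thesis .
  qed
  define d where "d = b - a"
  have d0: "d \<noteq> 0" using assms(3) unfolding d_def by simp
  define D where "D = (cmod d)\<^sup>2"
  define R where "R = Re a * Re d + Im a * Im d"
  have D0: "D > 0" using d0 unfolding D_def by simp
  have cd: "c = a + complex_of_real t * d" unfolding c_def d_def by (simp add: algebra_simps)
  have bd: "b = a + complex_of_real 1 * d" unfolding d_def by simp
  have ad: "a = a + complex_of_real 0 * d" by simp
  have fB: "B = A + 2 * R + D"
    using sq_line[of a 1 d] unfolding A_def B_def R_def D_def bd[symmetric] by simp
  define disc where "disc = R\<^sup>2 + D * (1 - A)"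
  have disc0: "disc > 0" unfolding disc_def using D0 A1 by (simp add: add_nonneg_pos)
  define s1 where "s1 = (- R - sqrt disc) / D"
  define s2 where "s2 = (- R + sqrt disc) / D"
  have sqd: "(sqrt disc)\<^sup>2 = disc" using disc0 by simp
  have fact: "D * (s - s1) * (s - s2) = D * s\<^sup>2 + 2 * R * s - (1 - A)" for s
  proof -
    have "D * (s - s1) * (s - s2) = ((D * s + R) ^ 2 - (sqrt disc)\<^sup>2) / D"
      unfolding s1_def s2_def using D0 by (simp add: field_simps power2_eq_square)
    also have "\<dots> = D * s\<^sup>2 + 2 * R * s - (1 - A)"
      unfolding sqd unfolding disc_def using D0 by (simp add: field_simps power2_eq_square)
    finally show ?thesis .
  qed
  have circ: "cmod (a + complex_of_real s * d) = 1 \<longleftrightarrow> s = s1 \<or> s = s2" for s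
  proof -
    have "cmod (a + complex_of_real s * d) = 1 \<longleftrightarrow> (cmod (a + complex_of_real s * d))\<^sup>2 = 1"
      by (smt (verit) norm_ge_zero power2_eq_1_iff)
    also have "\<dots> \<longleftrightarrow> D * s\<^sup>2 + 2 * R * s - (1 - A) = 0"
      unfolding sq_line A_def R_def D_def by (auto simp: algebra_simps)
    also have "\<dots> \<longleftrightarrow> D * (s - s1) * (s - s2) = 0" using fact by simp
    also have "\<dots> \<longleftrightarrow> s = s1 \<or> s = s2" using D0 by simp
    finally show ?thesis .
  qed
  have s12: "s1 < s2" unfolding s1_def s2_def using D0 disc0 by (simp add: divide_strict_right_mono)
  have f0: "D * (0 - s1) * (0 - s2) < 0" using fact[of 0] A1 by simp
  have f1: "D * (1 - s1) * (1 - s2) < 0" using fact[of 1] fB B1 by simp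
  have s1n: "s1 < 0" and s2p: "s2 > 0"
  proof -
    have "(0 - s1) * (0 - s2) < 0"
    proof (rule ccontr)
      assume "\<not> (0 - s1) * (0 - s2) < 0"
      hence "0 \<le> (0 - s1) * (0 - s2)" by simp
      hence "0 \<le> D * ((0 - s1) * (0 - s2))" using D0 by simp
      with f0 show False by (simp add: mult.assoc)
    qed
    thus "s1 < 0" "s2 > 0" using s12 by (auto simp: mult_less_0_iff)
  qed
  have s21: "s2 > 1" and s11: "s1 < 1"
  proof -
    have "(1 - s1) * (1 - s2) < 0"
    proof (rule ccontr)
      assume "\<not> (1 - s1) * (1 - s2) < 0"
      hence "0 \<le> (1 - s1) * (1 - s2)" by simp
      hence "0 \<le> D * ((1 - s1) * (1 - s2))" using D0 by simp
      with f1 show False by (simp add: mult.assoc)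
    qed
    thus "s2 > 1" "s1 < 1" using s12 by (auto simp: mult_less_0_iff)
  qed
  have h1: "hilbert_disk a c = ln ((t - s1) * (s2 - 0) / ((0 - s1) * (s2 - t)))"
    using hilbert_line[of d s1 0 t s2 a, OF d0 _ t0 _ circ] s1n t1 s21 ad[symmetric] cd[symmetric] by simp
  have h2: "hilbert_disk c b = ln ((1 - s1) * (s2 - t) / ((t - s1) * (s2 - 1)))"
    using hilbert_line[of d s1 t 1 s2 a, OF d0 _ t1 _ circ] s1n t0 s21 bd[symmetric] cd[symmetric] by simp
  have DP: "D * (s1 * s2) = - (1 - A)" using fact[of 0] by (simp add: algebra_simps)
  have DS: "D * (s1 + s2 - 1) = A - B"
    unfolding s1_def s2_def using D0 fB by (simp add: field_simps)
  have "D * (t\<^sup>2 * (s1 + s2 - 1) - 2 * (s1 * s2) * t + s1 * s2) = 0"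
  proof -
    have "D * (t\<^sup>2 * (s1 + s2 - 1) - 2 * (s1 * s2) * t + s1 * s2)
       = t\<^sup>2 * (D * (s1 + s2 - 1)) - 2 * (D * (s1 * s2)) * t + D * (s1 * s2)"
      by (simp add: algebra_simps)
    also have "\<dots> = 0" unfolding DP DS using tquad by (simp add: algebra_simps)
    finally show ?thesis .
  qed
  hence Q: "t\<^sup>2 * (s1 + s2 - 1) - 2 * (s1 * s2) * t + s1 * s2 = 0" using D0 by simp
  have cross: "((t - s1) * (s2 - 0)) * ((t - s1) * (s2 - 1)) = ((1 - s1) * (s2 - t)) * ((0 - s1) * (s2 - t))"
  proof -
    have "((t - s1) * (s2 - 0)) * ((t - s1) * (s2 - 1)) - ((1 - s1) * (s2 - t)) * ((0 - s1) * (s2 - t))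
       = (s2 - s1) * (t\<^sup>2 * (s1 + s2 - 1) - 2 * (s1 * s2) * t + s1 * s2)"
      by (simp add: power2_eq_square algebra_simps)
    thus ?thesis using Q by simp
  qed
  have Y: "(0 - s1) * (s2 - t) \<noteq> 0" and W: "(t - s1) * (s2 - 1) \<noteq> 0"
    using s1n t1 s21 t0 by auto
  have heq: "hilbert_disk a c = hilbert_disk c b"
  proof -
    have "(t - s1) * (s2 - 0) / ((0 - s1) * (s2 - t)) = (1 - s1) * (s2 - t) / ((t - s1) * (s2 - 1))"
      by (subst frac_eq_eq[OF Y W]) (rule cross)
    thus ?thesis unfolding h1 h2 by simp
  qed
  have cc: "cmod c < 1"
  proof -
    have "cmod c \<le> cmod (complex_of_real (1 - t) * a) + cmod (complex_of_real t * b)"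
      unfolding c_def by (rule norm_triangle_ineq)
    also have "\<dots> = (1 - t) * cmod a + t * cmod b"
      by (simp only: norm_mult norm_of_real) (use t0 t1 in simp)
    also have "\<dots> < (1 - t) * 1 + t * 1"
      using assms(1,2) t0 t1 by (intro add_less_le_mono mult_strict_left_mono mult_left_mono) auto
    finally show ?thesis by simp
  qed
  define sg where "sg = sqrt (1 - (cmod c)\<^sup>2)"
  have sg0: "sg > 0" unfolding sg_def using power_strict_mono[OF cc norm_ge_zero, of 2] by simp
  have n1: "cmod (a - c) = t * cmod d"
  proof -
    have "a - c = - (complex_of_real t * d)" unfolding cd by simp
    thus ?thesis using t0 by (simp add: norm_mult)
  qed
  have n2: "cmod (c - b) = (1 - t) * cmod d"
  proof -
    have "c - b = complex_of_real (t - 1) * d" unfolding cd bd by (simp add: algebra_simps)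
    thus ?thesis by (simp only: norm_mult norm_of_real) (use t1 in simp)
  qed
  have "cmod (a - c) / sqrt ((1 - (cmod a)\<^sup>2) * (1 - (cmod c)\<^sup>2))
      = cmod (c - b) / sqrt ((1 - (cmod c)\<^sup>2) * (1 - (cmod b)\<^sup>2))"
  proof -
    have e1: "sqrt ((1 - (cmod a)\<^sup>2) * (1 - (cmod c)\<^sup>2)) = sa * sg"
      unfolding sa_def sg_def A_def by (simp add: real_sqrt_mult)
    have e2: "sqrt ((1 - (cmod c)\<^sup>2) * (1 - (cmod b)\<^sup>2)) = sg * sb"
      unfolding sb_def sg_def B_def by (simp add: real_sqrt_mult)
    have "t * sb = (1 - t) * sa" using tsum by (simp add: algebra_simps)
    hence "t * cmod d * (sg * sb) = (1 - t) * cmod d * (sa * sg)"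
      by (metis mult.commute mult.left_commute)
    thus ?thesis unfolding e1 e2 n1 n2 using sa0 sb0 sg0 by (simp add: frac_eq_eq)
  qed
  hence "rho_disk a c = rho_disk c b" unfolding rho_disk_def by simp
  with t0 t1 heq show ?thesis by simp
qed

end
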